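(* Let $0<e<d$ be coprime integers and let $e'$ be the unique integer with $0<e'<d$ and $ee'\equiv1\pmod d$. Let $J=\{(i,j)\in\mathbb{Z}_{\ge0}^2\setminus\{(0,0)\}: i+ej\equiv0\pmod d,\ i<e,\ j<e'\}$. Then $|J|\le1$ if and only if $e$ divides $d+1$. *)

theory Defs
  imports Main "HOL-Number_Theory.Cong"
begin

end

theory Submission
  imports Defs
begin

theorem lemma5p3:
  fixes d e e' :: int
  assumes "0 < e" and "e < d" and "coprime e d"
    and "0 < e'" and "e' < d" and "[e * e' = 1] (mod d)"
  shows "card {(i::int, j::int). 0 \<le> i \<and> 0 \<le> j \<and> (i, j) \<noteq> (0, 0)
                \<and> [i + e * j = 0] (mod d) \<and> i < e \<and> j < e'} \<le> 1
         \<longleftrightarrow> e dvd d + 1"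
proof -
  define J where "J = {(i::int, j::int). 0 \<le> i \<and> 0 \<le> j \<and> (i, j) \<noteq> (0, 0)
                \<and> [i + e * j = 0] (mod d) \<and> i < e \<and> j < e'}"
  have fin: "finite J"
    by (rule finite_subset[of _ "{0..<e} \<times> {0..<e'}"]) (auto simp: J_def)
  have c0: "\<And>a. [a = 0] (mod d) \<longleftrightarrow> d dvd a"
    by (simp add: cong_0_iff)
  have "card J \<le> 1 \<longleftrightarrow> e dvd d + 1"
  proof
    assume cJ: "card J \<le> 1"
    show "e dvd d + 1"
    proof (rule ccontr)
      assume nd: "\<not> e dvd d + 1"
      hence e2: "e \<ge> 2" using assms(1) by (cases "e = 1") auto
      define q where "q = d div e"
      define r where "r = d mod e"
      have dqr: "d = e * q + r" unfolding q_def r_def by simp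
      have r0: "0 \<le> r" "r < e" unfolding r_def using assms(1) by auto
      have q1: "q \<ge> 1" 
      proof (rule ccontr)
        assume "\<not> q \<ge> 1"
        hence "e * q \<le> 0" using assms(1) by (simp add: mult_nonneg_nonpos)
        thus False using dqr r0 assms(2) by linarith
      qed
      have dv: "d dvd e * e' - 1" using assms(6)
        by (metis cong_iff_dvd_diff cong_sym)
      have pos: "e * e' - 1 > 0" using e2 assms(4)
        
      proof -
        have "e * e' \<ge> 2 * 1" using e2 assms(4) by (intro mult_mono) auto
        thus ?thesis by simp
      qed
      have "e * e' - 1 \<ge> d" using zdvd_imp_le[OF dv pos] .
      hence "e * q < e * e'" using dqr r0 by linarith
      hence qe: "q < e'" using assms(1) by simp
      have A: "(e - 1, e' - 1) \<in> J" unfolding J_def using e2 assms(4)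
        apply (simp add: c0)
        using dv by (simp add: algebra_simps)
      have B: "(r, q) \<in> J" unfolding J_def using r0 q1 qe
        apply (simp add: c0)
        using dqr by (metis add.commute dvd_refl)
      have ne: "r \<noteq> e - 1"
      proof
        assume "r = e - 1"
        hence "d + 1 = e * (q + 1)" using dqr by (simp add: algebra_simps)
        thus False using nd by simp
      qed
      have "card {(e - 1, e' - 1), (r, q)} \<le> card J"
        using A B fin by (intro card_mono) auto
      thus False using ne cJ by simp
    qed
  next
    assume "e dvd d + 1"
    then obtain k where k: "d + 1 = e * k" by (auto simp: dvd_def)
    show "card J \<le> 1"
    proof (cases "e = 1")
      case True
      have "J = {}"
      proof (rule ccontr)
        assume "J \<noteq> {}"
        then obtain i j where ij: "(i, j) \<in> J" by auto
        hence h: "i = 0" "0 \<le> j" "j < e'" "d dvd i + j" "j \<noteq> 0"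
          unfolding J_def using True by (auto simp: c0)
        hence "d dvd j" by simp
        note h = h this
        hence "d \<le> j" using h by (intro zdvd_imp_le) auto
        thus False using \<open>j < e'\<close> assms(5) by linarith
      qed
      thus ?thesis by simp
    next
      case False
      hence e2: "e \<ge> 2" using assms(1) by auto
      have k1: "k \<ge> 1" 
      proof -
        have "0 < e * k" using k assms(2,1) by linarith
        thus ?thesis using assms(1) by (simp add: zero_less_mult_iff)
      qed
      have "2 * k \<le> e * k" using e2 k1 by (simp add: mult_right_mono)
      hence kd: "k < d" using k e2 assms(2) by linarith
      have "[e * e' = e * k] (mod d)"
      proof -
        have "[e * k = 1] (mod d)" using k[symmetric]
          by (simp add: cong_def)
        thus ?thesis using assms(6) by (meson cong_sym cong_trans)
      qed
      hence "[e' = k] (mod d)" using assms(3) cong_mult_lcancel by blast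
      hence ek: "e' = k" using assms(4,5) kd k1
        by (simp add: cong_def)
      have "J \<subseteq> {(e - 1, k - 1)}"
      proof
        fix x assume "x \<in> J"
        then obtain i j where x: "x = (i, j)" and i0: "0 \<le> i" and j0: "0 \<le> j"
          and nz: "(i, j) \<noteq> (0, 0)" and dd: "d dvd i + e * j" and ie: "i < e"
          and je: "j < k"
          unfolding J_def using ek by (auto simp: c0)
        obtain t where t: "i + e * j = d * t" using dd by (auto simp: dvd_def)
        have "i + e * j > 0" 
        proof (cases "j = 0")
          case True thus ?thesis using i0 nz by auto
        next
          case False
          hence "0 < e * j" using j0 assms(1) by simp
          thus ?thesis using i0 by linarith
        qed
        hence t1: "t \<ge> 1" 
        proof -
          have "0 < d * t" using t \<open>i + e * j > 0\<close> by simp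
          thus ?thesis using assms(1,2) by (simp add: zero_less_mult_iff)
        qed
        have "e * j \<le> e * (k - 1)" using je assms(1) by simp
        hence "d * t \<le> d" using t ie k by (simp add: algebra_simps)
        hence "t \<le> 1" using assms(1,2) by simp
        hence "i + 1 = e * (k - j)" using t t1 k by (simp add: algebra_simps)
        hence "k - j = 1" 
        proof -
          have p: "0 < e * (k - j)" "e * (k - j) \<le> e * 1" using i0 ie \<open>i + 1 = e * (k - j)\<close> by linarith+
          have "0 < k - j" using p(1) assms(1) by (simp add: zero_less_mult_iff)
          moreover have "k - j \<le> 1" using p(2) assms(1) by simp
          ultimately show ?thesis by simp
        qed
        thus "x \<in> {(e - 1, k - 1)}" using x \<open>i + 1 = e * (k - j)\<close> by simp
      qed
      hence "card J \<le> card {(e - 1, k - 1)}" by (intro card_mono) auto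
      thus ?thesis by simp
    qed
  qed
  thus ?thesis unfolding J_def .
qed

end
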